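(* In the setting described in the context, let $\Delta'$ be the orthogonal projector onto $\operatorname{span}\{\ket{\psi_x'}:f(x)=1\}$ and $R=2\Delta'-I$. If $\varepsilon\kappa<1/12$, then for every $x$ with $f(x)=0$, $\|(I+R)\ket{\phi_x'}\|\le 8\varepsilon(c+1)A\sqrt{\kappa}$.
   Context: Let $X\subseteq\{0,1\}^n$, $f:X\to\{0,1\}$, $c>0$, and let $\{\ket{v_{x,i}}\in\mathbb{R}^m\}_{x\in X,i\in[n]}$ be a real $f$-deciding vector set, i.e. $\sum_{i:x_i\ne y_i}\braket{v_{x,i}}{v_{y,i}}=1$ whenever $f(x)\ne f(y)$, with size $A=\max_x\sum_i\|\ket{v_{x,i}}\|^2$. Let $\mathcal{H}=\mathbb{R}\oplus(\mathbb{R}^n\otimes\mathbb{R}^m\otimes\mathbb{R}^2)$ with $\ket{\hat0}$ a unit vector spanning the first summand. For $f(x)=1$ let $\ket{\psi_x}=\frac{1}{\sqrt{\nu_x}}\big(\ket{\hat0}+\frac{1}{\sqrt{cA}}\sum_i\ket{i}\ket{v_{x,i}}\ket{x_i}\big)$ with $\nu_x$ chosen so $\|\ket{\psi_x}\|=1$; for $f(x)=0$ let $\ket{\phi_x}=\frac{1}{\sqrt{\mu_x}}\big(\ket{\hat0}-\sqrt{cA}\sum_i\ket{i}\ket{v_{x,i}}\ket{\bar x_i}\big)$ with $\mu_x$ chosen so $\|\ket{\phi_x}\|=1$, $\bar x_i=1-x_i$. Let $\kappa=\dim\operatorname{span}\{\ket{\psi_x}:f(x)=1\}$, $\{\ket{\zeta_j}\}_{j\in[\kappa]}$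 an orthonormal basis of it, with fixed real $\alpha_{j,x}$ such that $\ket{\zeta_j}=\sum_{x:f(x)=1}\alpha_{j,x}\ket{\psi_x}$. Let $\ket{C_{j,i,b}}=\sum_{x:f(x)=1,x_i=b}\frac{\alpha_{j,x}}{\sqrt{\nu_x}}\ket{v_{x,i}}$ and $V=\{\ket{C_{j,i,b}}\}_{j,i,b}\cup\{\ket{v_{y,i}}:f(y)=0,i\in[n]\}$. Let $\varepsilon>0$ and $S\in\mathbb{R}^{N\times m}$ satisfy $(1-\varepsilon)\|u-v\|^2\le\|Su-Sv\|^2\le(1+\varepsilon)\|u-v\|^2$ for all $u,v\in V\cup\{0\}$. Let $T=\ket{\hat0}\bra{\hat0}+I_n\otimes S\otimes I_2$ and $\ket{\psi_x'}=T\ket{\psi_x}$, $\ket{\phi_x'}=T\ket{\phi_x}$. *)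

theory Defs
  imports "HOL-Analysis.Analysis"
begin

text \<open>The space H = R (+) (R^n (x) R^m (x) R^2) is modelled as
  real \<times> (real^('n \<times> 'm \<times> bool)); the first component spans |0hat>,
  the index type 'n plays the role of [n], 'm of [m], bool of {0,1}.\<close>

definition ket :: "'n::finite \<Rightarrow> real^'m::finite \<Rightarrow> bool \<Rightarrow> real^('n \<times> 'm \<times> bool)" where
  "ket i w b = (\<chi> p. case p of (i', k, b') \<Rightarrow> if i' = i \<and> b' = b then w $ k else 0)"

definition hat0 :: "real \<times> (real^('n::finite \<times> 'm::finite \<times> bool))" where
  "hat0 = (1, 0)"

definition psi_un :: "real \<Rightarrow> real \<Rightarrow> (('n::finite \<Rightarrow> bool) \<Rightarrow> 'n \<Rightarrow> real^'m::finite) \<Rightarrow> ('n \<Rightarrow> bool)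
    \<Rightarrow> real \<times> (real^('n \<times> 'm \<times> bool))" where
  "psi_un c A v x = hat0 + (0, (1 / sqrt (c * A)) *\<^sub>R (\<Sum>i\<in>UNIV. ket i (v x i) (x i)))"

definition nu :: "real \<Rightarrow> real \<Rightarrow> (('n::finite \<Rightarrow> bool) \<Rightarrow> 'n \<Rightarrow> real^'m::finite) \<Rightarrow> ('n \<Rightarrow> bool) \<Rightarrow> real" where
  "nu c A v x = (norm (psi_un c A v x))\<^sup>2"

definition psi :: "real \<Rightarrow> real \<Rightarrow> (('n::finite \<Rightarrow> bool) \<Rightarrow> 'n \<Rightarrow> real^'m::finite) \<Rightarrow> ('n \<Rightarrow> bool)
    \<Rightarrow> real \<times> (real^('n \<times> 'm \<times> bool))" where
  "psi c A v x = (1 / sqrt (nu c A v x)) *\<^sub>R psi_un c A v x"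

definition phi_un :: "real \<Rightarrow> real \<Rightarrow> (('n::finite \<Rightarrow> bool) \<Rightarrow> 'n \<Rightarrow> real^'m::finite) \<Rightarrow> ('n \<Rightarrow> bool)
    \<Rightarrow> real \<times> (real^('n \<times> 'm \<times> bool))" where
  "phi_un c A v x = hat0 - (0, sqrt (c * A) *\<^sub>R (\<Sum>i\<in>UNIV. ket i (v x i) (\<not> x i)))"

definition mu :: "real \<Rightarrow> real \<Rightarrow> (('n::finite \<Rightarrow> bool) \<Rightarrow> 'n \<Rightarrow> real^'m::finite) \<Rightarrow> ('n \<Rightarrow> bool) \<Rightarrow> real" where
  "mu c A v x = (norm (phi_un c A v x))\<^sup>2"

definition phi :: "real \<Rightarrow> real \<Rightarrow> (('n::finite \<Rightarrow> bool) \<Rightarrow> 'n \<Rightarrow> real^'m::finite) \<Rightarrow> ('n \<Rightarrow> bool)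
    \<Rightarrow> real \<times> (real^('n \<times> 'm \<times> bool))" where
  "phi c A v x = (1 / sqrt (mu c A v x)) *\<^sub>R phi_un c A v x"

text \<open>T = |0hat><0hat| + I_n (x) S (x) I_2, with S an N x m matrix.\<close>
definition Tmap :: "real^'m::finite^'N::finite \<Rightarrow> real \<times> (real^('n::finite \<times> 'm \<times> bool))
    \<Rightarrow> real \<times> (real^('n \<times> 'N \<times> bool))" where
  "Tmap S h = (fst h, \<chi> p. case p of (i, k, b) \<Rightarrow> \<Sum>l\<in>UNIV. S $ k $ l * (snd h) $ (i, l, b))"

definition orth_proj :: "'a::real_inner set \<Rightarrow> 'a \<Rightarrow> 'a" where
  "orth_proj W v = (THE p. p \<in> span W \<and> (\<forall>w\<in>W. inner (v - p) w = 0))"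

end

theory Submission
  imports Defs
begin

definition blk :: "('n::finite \<Rightarrow> bool \<Rightarrow> real^'m::finite) \<Rightarrow> real^('n \<times> 'm \<times> bool)" where
  "blk g = (\<chi> p. case p of (i,k,b) \<Rightarrow> g i b $ k)"

lemma blk_comp[simp]: "blk g $ (i,k,b) = g i b $ k"
  by (simp add: blk_def)

lemma blk_add: "blk g + blk h = blk (\<lambda>i b. g i b + h i b)"
  by (simp add: vec_eq_iff)

lemma blk_scale: "r *\<^sub>R blk g = blk (\<lambda>i b. r *\<^sub>R g i b)"
  by (simp add: vec_eq_iff)

lemma blk_sum: "(\<Sum>x\<in>A. blk (g x)) = blk (\<lambda>i b. \<Sum>x\<in>A. g x i b)"
  by (simp add: vec_eq_iff)

lemma blk_neg: "- blk g = blk (\<lambda>i b. - g i b)"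
  by (simp add: vec_eq_iff)

lemma blk_zero: "blk (\<lambda>i b. 0) = 0"
  by (simp add: vec_eq_iff)

lemma sum_ket: "(\<Sum>i\<in>UNIV. ket i (w i) (x i)) = blk (\<lambda>i b. if b = x i then w i else 0)"
proof -
  have "(\<Sum>i\<in>UNIV. ket i (w i) (x i)) $ (i', k, b) = blk (\<lambda>i b. if b = x i then w i else 0) $ (i', k, b)" for i' k b
  proof -
    have "(\<Sum>i\<in>UNIV. ket i (w i) (x i)) $ (i', k, b) = (\<Sum>i\<in>UNIV. if i = i' then (if b = x i then w i $ k else 0) else 0)"
      unfolding ket_def sum_component vec_lambda_beta by (rule sum.cong) auto
    also have "\<dots> = (if b = x i' then w i' $ k else 0)" by (simp add: sum.delta')
    finally show ?thesis by simp
  qed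
  then show ?thesis by (simp add: vec_eq_iff)
qed

lemma inner_blk: "inner (blk g) (blk h) = (\<Sum>i\<in>UNIV. \<Sum>b\<in>UNIV. inner (g i b) (h i b))"
proof -
  have "inner (blk g) (blk h) = (\<Sum>p\<in>UNIV. (blk g $ p) * (blk h $ p))"
    by (simp add: inner_vec_def)
  also have "\<dots> = (\<Sum>(i,k,b)\<in>UNIV \<times> UNIV \<times> UNIV. g i b $ k * h i b $ k)"
    by (subst UNIV_Times_UNIV[symmetric], subst UNIV_Times_UNIV[symmetric]) (rule sum.cong, auto)
  also have "\<dots> = (\<Sum>i\<in>UNIV. \<Sum>k\<in>UNIV. \<Sum>b\<in>UNIV. g i b $ k * h i b $ k)"
    by (simp add: sum.cartesian_product)
  also have "\<dots> = (\<Sum>i\<in>UNIV. \<Sum>b\<in>UNIV. \<Sum>k\<in>UNIV. g i b $ k * h i b $ k)"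
    by (rule sum.cong[OF refl], rule sum.swap)
  also have "\<dots> = (\<Sum>i\<in>UNIV. \<Sum>b\<in>UNIV. inner (g i b) (h i b))"
    by (simp add: inner_vec_def)
  finally show ?thesis .
qed

lemma Tmap_blk: "Tmap S (a, blk g) = (a, blk (\<lambda>i b. S *v g i b))"
  by (simp add: Tmap_def vec_eq_iff matrix_vector_mult_def)

lemma linear_Tmap: "linear (Tmap S)"
  apply (rule linearI)
  apply (auto simp: Tmap_def vec_eq_iff algebra_simps sum.distrib sum_distrib_left)
  done

lemma inner_pb: "inner (a::real, blk F) (a', blk G) = a*a' + (\<Sum>i\<in>UNIV. \<Sum>b\<in>UNIV. inner (F i b) (G i b))"
  by (simp add: inner_prod_def inner_blk)

lemma inner_pb_scale: "inner (a::real, blk (\<lambda>i b. r *\<^sub>R F i b)) (a', blk (\<lambda>i b. r' *\<^sub>R G i b))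
   = a*a' + r*r' * (\<Sum>i\<in>UNIV. \<Sum>b\<in>UNIV. inner (F i b) (G i b))"
  by (simp add: inner_prod_def inner_blk sum_distrib_left mult.assoc mult.left_commute)

lemma sum_bool_if: "(\<Sum>b\<in>UNIV. inner (F b) (if b = z then G else 0)) = inner (F z) (G::'a::real_inner)" for z :: bool
  unfolding UNIV_bool by (cases z) auto

lemma orth_proj_props:
  fixes W :: "'a::euclidean_space set"
  shows "orth_proj W x \<in> span W \<and> (\<forall>w\<in>W. inner (x - orth_proj W x) w = 0)"
proof -
  obtain y z where y: "y \<in> span W" and z: "\<And>w. w \<in> span W \<Longrightarrow> orthogonal z w" and xyz: "x = y + z"
    using orthogonal_subspace_decomp_exists by blast
  have Py: "y \<in> span W \<and> (\<forall>w\<in>W. inner (x - y) w = 0)"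
    using y z xyz by (auto simp: orthogonal_def span_base)
  have uq: "q = y" if q: "q \<in> span W \<and> (\<forall>w\<in>W. inner (x - q) w = 0)" for q
  proof -
    have "q - y \<in> span W" using q y by (simp add: span_diff)
    moreover have "orthogonal (q - y) w" if "w \<in> W" for w
    proof -
      have "inner (q - y) w = inner (x - y) w - inner (x - q) w" by (simp add: inner_diff_left)
      then show ?thesis using q Py that by (simp add: orthogonal_def)
    qed
    ultimately have "orthogonal (q - y) (q - y)" using orthogonal_to_span by blast
    then show ?thesis by (simp add: orthogonal_def)
  qed
  show ?thesis unfolding orth_proj_def using Py uq by (rule theI)
qed

lemma span_sum_repr:
  assumes "z \<in> span (g ` I)" and finI: "finite I"
  shows "\<exists>\<beta>. z = (\<Sum>j\<in>I. \<beta> j *\<^sub>R g j)"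
proof -
  have "subspace {z. \<exists>\<beta>. z = (\<Sum>j\<in>I. \<beta> j *\<^sub>R g j)}"
  proof (rule subspaceI)
    show "0 \<in> {z. \<exists>\<beta>. z = (\<Sum>j\<in>I. \<beta> j *\<^sub>R g j)}"
      by (auto intro!: exI[of _ "\<lambda>_. 0"])
  next
    fix x y assume "x \<in> {z. \<exists>\<beta>. z = (\<Sum>j\<in>I. \<beta> j *\<^sub>R g j)}" "y \<in> {z. \<exists>\<beta>. z = (\<Sum>j\<in>I. \<beta> j *\<^sub>R g j)}"
    then obtain \<beta>1 \<beta>2 where "x = (\<Sum>j\<in>I. \<beta>1 j *\<^sub>R g j)" "y = (\<Sum>j\<in>I. \<beta>2 j *\<^sub>R g j)" by auto
    then show "x + y \<in> {z. \<exists>\<beta>. z = (\<Sum>j\<in>I. \<beta> j *\<^sub>R g j)}"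
      by (auto intro!: exI[of _ "\<lambda>j. \<beta>1 j + \<beta>2 j"] simp: sum.distrib scaleR_add_left)
  next
    fix c x assume "x \<in> {z. \<exists>\<beta>. z = (\<Sum>j\<in>I. \<beta> j *\<^sub>R g j)}"
    then obtain \<beta>1 where "x = (\<Sum>j\<in>I. \<beta>1 j *\<^sub>R g j)" by auto
    then show "c *\<^sub>R x \<in> {z. \<exists>\<beta>. z = (\<Sum>j\<in>I. \<beta> j *\<^sub>R g j)}"
      by (auto intro!: exI[of _ "\<lambda>j. c * \<beta>1 j"] simp: scaleR_sum_right)
  qed
  moreover have "g j \<in> {z. \<exists>\<beta>. z = (\<Sum>j\<in>I. \<beta> j *\<^sub>R g j)}" if "j \<in> I" for j
  proof (cases "finite I")
    case True
    then show ?thesis using that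
    proof -
      have "(\<Sum>ja\<in>I. (if ja = j then 1 else 0) *\<^sub>R g ja) = (\<Sum>ja\<in>I. if ja = j then g ja else 0)"
        by (rule sum.cong) auto
      also have "\<dots> = g j" using True that by (simp add: sum.delta)
      finally show ?thesis by (auto intro!: exI[of _ "\<lambda>j'. if j' = j then 1 else 0"])
    qed
  next
    case False
    then show ?thesis using finI by auto
  qed
  ultimately show ?thesis using assms span_induct[of z "g ` I"] by blast
qed

lemma jl_inner:
  fixes S :: "real^'m::finite^'N::finite"
  assumes JL: "\<forall>u\<in>U. \<forall>w\<in>U. (1 - \<epsilon>) * (norm (u - w))\<^sup>2 \<le> (norm (S *v u - S *v w))\<^sup>2 \<and>
                  (norm (S *v u - S *v w))\<^sup>2 \<le> (1 + \<epsilon>) * (norm (u - w))\<^sup>2"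
    and "0 \<in> U" "u \<in> U" "w \<in> U" "\<epsilon> > 0"
  shows "\<bar>inner (S *v u) (S *v w) - inner u w\<bar> \<le> 3/2 * \<epsilon> * ((norm u)\<^sup>2 + (norm w)\<^sup>2)"
proof -
  have du: "(1 - \<epsilon>) * (norm u)\<^sup>2 \<le> (norm (S *v u))\<^sup>2 \<and> (norm (S *v u))\<^sup>2 \<le> (1 + \<epsilon>) * (norm u)\<^sup>2"
    using JL assms(2,3) by (metis diff_zero matrix_vector_mult_0_right)
  have dw: "(1 - \<epsilon>) * (norm w)\<^sup>2 \<le> (norm (S *v w))\<^sup>2 \<and> (norm (S *v w))\<^sup>2 \<le> (1 + \<epsilon>) * (norm w)\<^sup>2"
    using JL assms(2,4) by (metis diff_zero matrix_vector_mult_0_right)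
  have duw: "(1 - \<epsilon>) * (norm (u - w))\<^sup>2 \<le> (norm (S *v u - S *v w))\<^sup>2 \<and> (norm (S *v u - S *v w))\<^sup>2 \<le> (1 + \<epsilon>) * (norm (u - w))\<^sup>2"
    using JL assms(3,4) by blast
  have e1: "(norm (u - w))\<^sup>2 = (norm u)\<^sup>2 + (norm w)\<^sup>2 - 2 * inner u w"
    by (simp add: power2_norm_eq_inner inner_diff_left inner_diff_right inner_commute)
  have e2: "(norm (S *v u - S *v w))\<^sup>2 = (norm (S *v u))\<^sup>2 + (norm (S *v w))\<^sup>2 - 2 * inner (S *v u) (S *v w)"
    by (simp add: power2_norm_eq_inner inner_diff_left inner_diff_right inner_commute)
  have cs: "\<bar>inner u w\<bar> \<le> norm u * norm w" by (rule Cauchy_Schwarz_ineq2)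
  have am: "norm u * norm w \<le> ((norm u)\<^sup>2 + (norm w)\<^sup>2) / 2"
    using sum_squares_bound[of "norm u" "norm w"] by (simp add: power2_eq_square)
  have "(norm (u - w))\<^sup>2 \<le> 2 * ((norm u)\<^sup>2 + (norm w)\<^sup>2)" using e1 cs am by (simp add: abs_le_iff)
  then have "\<epsilon> * (norm (u - w))\<^sup>2 \<le> \<epsilon> * (2 * ((norm u)\<^sup>2 + (norm w)\<^sup>2))"
    using assms(5) by (intro mult_left_mono) auto
  then show ?thesis using du dw duw e1 e2 assms(5)
    by (simp add: abs_le_iff algebra_simps)
qed

lemma final_arith:
  fixes P sm q B ep k :: real
  assumes "0 \<le> P" "P \<le> sm*B" "q - 3*ep*(sm\<^sup>2) \<le> P" "(sm\<^sup>2) \<le> k*q" "ep*k < 1/12" "0 \<le> sm" "0 \<le> B" "0 \<le> k" "ep > 0"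
  shows "P \<le> 4/3*k*B\<^sup>2"
proof -
  have "k*q \<le> k*(P + 3*ep*(sm\<^sup>2))" using assms(3,8) by (intro mult_left_mono) auto
  moreover have "k*(3*ep*(sm\<^sup>2)) \<le> (sm\<^sup>2)/4"
  proof -
    have "k*(3*ep*(sm\<^sup>2)) = (3*(ep*k))*(sm\<^sup>2)" by (simp add: algebra_simps)
    also have "\<dots> \<le> (1/4)*(sm\<^sup>2)" using assms(5) by (intro mult_right_mono) auto
    finally show ?thesis by simp
  qed
  ultimately have s2: "(sm\<^sup>2) \<le> 4/3*k*P" using assms(4) by (simp add: algebra_simps)
  have "P*P \<le> (sm*B)*(sm*B)" using assms(1,2) by (intro mult_mono) auto
  also have "\<dots> = (sm\<^sup>2) * B\<^sup>2" by (simp add: power2_eq_square)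
  also have "\<dots> \<le> (4/3*k*P) * B\<^sup>2" using s2 by (intro mult_right_mono) auto
  finally have PP: "P*P \<le> (4/3*k*B\<^sup>2) * P" by (simp add: algebra_simps)
  show ?thesis
  proof (cases "P = 0")
    case True then show ?thesis using assms by simp
  next
    case False
    then have "P > 0" using assms(1) by simp
    then show ?thesis using PP by (simp add: mult_le_cancel_right)
  qed
qed

theorem lemma13:
  fixes X :: "('n::finite \<Rightarrow> bool) set"
    and f :: "('n \<Rightarrow> bool) \<Rightarrow> bool"
    and c A \<epsilon> :: real
    and v :: "('n \<Rightarrow> bool) \<Rightarrow> 'n \<Rightarrow> real^'m::finite"
    and \<kappa> :: nat
    and \<zeta> :: "nat \<Rightarrow> real \<times> (real^('n \<times> 'm \<times> bool))"
    and \<alpha> :: "nat \<Rightarrow> ('n \<Rightarrow> bool) \<Rightarrow> real"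
    and S :: "real^'m^'N::finite"
  assumes c_pos: "c > 0"
    and deciding: "\<forall>x\<in>X. \<forall>y\<in>X. f x \<noteq> f y \<longrightarrow>
                     (\<Sum>i\<in>{i. x i \<noteq> y i}. inner (v x i) (v y i)) = 1"
    and A_def: "A = Max {(\<Sum>i\<in>UNIV. (norm (v x i))\<^sup>2) | x. x \<in> X}"
    and kappa_def: "\<kappa> = dim (psi c A v ` {x \<in> X. f x})"
    and zeta_orthonormal: "\<forall>j<\<kappa>. \<forall>k<\<kappa>. inner (\<zeta> j) (\<zeta> k) = (if j = k then 1 else 0)"
    and zeta_span: "span (\<zeta> ` {..<\<kappa>}) = span (psi c A v ` {x \<in> X. f x})"
    and zeta_alpha: "\<forall>j<\<kappa>. \<zeta> j = (\<Sum>x\<in>{x \<in> X. f x}. \<alpha> j x *\<^sub>R psi c A v x)"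
    and eps_pos: "\<epsilon> > 0"
    and JL: "let C = (\<lambda>j i b. \<Sum>x\<in>{x \<in> X. f x \<and> x i = b}. (\<alpha> j x / sqrt (nu c A v x)) *\<^sub>R v x i);
                 V = {C j i b | j i b. j < \<kappa>} \<union> {v y i | y i. y \<in> X \<and> \<not> f y}
             in \<forall>u\<in>V \<union> {0}. \<forall>w\<in>V \<union> {0}.
                  (1 - \<epsilon>) * (norm (u - w))\<^sup>2 \<le> (norm (S *v u - S *v w))\<^sup>2 \<and>
                  (norm (S *v u - S *v w))\<^sup>2 \<le> (1 + \<epsilon>) * (norm (u - w))\<^sup>2"
    and small: "\<epsilon> * real \<kappa> < 1 / 12"
  shows "\<forall>x\<in>X. \<not> f x \<longrightarrow>
           (let W = Tmap S ` psi c A v ` {x \<in> X. f x};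
                R = (\<lambda>h. 2 *\<^sub>R orth_proj W h - h);
                \<phi>' = Tmap S (phi c A v x)
            in norm (\<phi>' + R \<phi>') \<le> 8 * \<epsilon> * (c + 1) * A * sqrt (real \<kappa>))"
proof (intro ballI impI)
  fix y assume yX: "y \<in> X" and fy: "\<not> f y"
  define X1 where "X1 = {x \<in> X. f x}"
  define W where "W = Tmap S ` psi c A v ` X1"
  define \<phi>' where "\<phi>' = Tmap S (phi c A v y)"
  define p where "p = orth_proj W \<phi>'"
  have pW: "p \<in> span W" and porth: "\<forall>w\<in>W. inner (\<phi>' - p) w = 0"
    using orth_proj_props[of W \<phi>'] unfolding p_def by auto
  have finX: "finite X" by (rule finite_subset[of _ UNIV]) auto
  have finX1: "finite X1" using finX unfolding X1_def by auto
  have Ane: "(\<Sum>i\<in>UNIV. (norm (v x i))\<^sup>2) \<le> A" if "x \<in> X" for x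
    unfolding A_def by (rule Max_ge) (use finX that in auto)
  have A0: "0 \<le> A" using Ane[OF yX] by (meson order_trans sum_nonneg zero_le_power2)
  have main: "norm p \<le> 4 * \<epsilon> * (c + 1) * A * sqrt (real \<kappa>)"
  proof (cases "X1 = {}")
    case True
    then have "p = 0" using pW unfolding W_def by simp
    then show ?thesis using eps_pos c_pos A0 by simp
  next
    case False
    then obtain x0 where x0: "x0 \<in> X1" by auto
    have x0X: "x0 \<in> X" and fx0: "f x0" using x0 unfolding X1_def by auto
    have dec0: "(\<Sum>i\<in>{i. x0 i \<noteq> y i}. inner (v x0 i) (v y i)) = 1"
      using deciding x0X yX fx0 fy by auto
    have "\<exists>i. v x0 i \<noteq> 0"
    proof (rule ccontr)
      assume "\<not> (\<exists>i. v x0 i \<noteq> 0)"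
      then have "(\<Sum>i\<in>{i. x0 i \<noteq> y i}. inner (v x0 i) (v y i)) = 0" by simp
      then show False using dec0 by simp
    qed
    then obtain i0 where i0: "v x0 i0 \<noteq> 0" by auto
    have "0 < (norm (v x0 i0))\<^sup>2" using i0 by simp
    also have "\<dots> \<le> (\<Sum>i\<in>UNIV. (norm (v x0 i))\<^sup>2)" by (rule member_le_sum) auto
    also have "\<dots> \<le> A" by (rule Ane[OF x0X])
    finally have Apos: "A > 0" .
    define sq where "sq = sqrt (c * A)"
    have sqpos: "sq > 0" unfolding sq_def using Apos c_pos by simp
    have sqsq: "sq * sq = c * A" unfolding sq_def using Apos c_pos by simp
    have nu1: "nu c A v x \<ge> 1" for x
      unfolding nu_def psi_un_def hat0_def by (simp add: power2_norm_eq_inner inner_prod_def)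
    have mu1: "mu c A v x \<ge> 1" for x
      unfolding mu_def phi_un_def hat0_def using A0 c_pos
      by (auto simp: power2_norm_eq_inner inner_prod_def intro!: mult_nonneg_nonneg)
    have psi_rep: "psi c A v x = (1 / sqrt (nu c A v x),
        blk (\<lambda>i b. (1 / sqrt (nu c A v x) / sq) *\<^sub>R (if b = x i then v x i else 0)))" for x
      unfolding psi_def psi_un_def hat0_def sum_ket sq_def by (simp add: blk_scale)
    have phi_rep: "phi c A v y = (1 / sqrt (mu c A v y),
        blk (\<lambda>i b. (- (sq / sqrt (mu c A v y))) *\<^sub>R (if b = (\<not> y i) then v y i else 0)))"
      unfolding phi_def phi_un_def hat0_def sum_ket sq_def by (simp add: blk_scale blk_neg)
    define a where "a = (\<lambda>j. \<Sum>x\<in>X1. \<alpha> j x / sqrt (nu c A v x))"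
    define C where "C = (\<lambda>j i b. \<Sum>x\<in>{x \<in> X. f x \<and> x i = b}. (\<alpha> j x / sqrt (nu c A v x)) *\<^sub>R v x i)"
    have zeta_sum: "\<zeta> j = (\<Sum>x\<in>X1. \<alpha> j x *\<^sub>R psi c A v x)" if "j < \<kappa>" for j
      using zeta_alpha that unfolding X1_def by auto
    have Ckey: "(\<Sum>x\<in>X1. (\<alpha> j x * (1 / sqrt (nu c A v x) / sq)) *\<^sub>R (if b = x i then v x i else 0))
        = (1 / sq) *\<^sub>R C j i b" for j i b
    proof -
      have "{x \<in> X. f x \<and> x i = b} = {x \<in> X1. x i = b}" unfolding X1_def by auto
      then have "C j i b = (\<Sum>x\<in>X1. if x i = b then (\<alpha> j x / sqrt (nu c A v x)) *\<^sub>R v x i else 0)"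
        unfolding C_def using sum.inter_filter[OF finX1] by simp
      then show ?thesis
        by (simp add: scaleR_sum_right) (rule sum.cong, auto)
    qed
    have zeta_rep: "\<zeta> j = (a j, blk (\<lambda>i b. (1 / sq) *\<^sub>R C j i b))" if "j < \<kappa>" for j
    proof -
      have "\<zeta> j = (\<Sum>x\<in>X1. (\<alpha> j x / sqrt (nu c A v x),
          blk (\<lambda>i b. (\<alpha> j x * (1 / sqrt (nu c A v x) / sq)) *\<^sub>R (if b = x i then v x i else 0))))"
        unfolding zeta_sum[OF that] psi_rep by (simp add: blk_scale)
      also have "\<dots> = (a j, blk (\<lambda>i b. (1 / sq) *\<^sub>R C j i b))"
        by (simp only: prod_eq_iff fst_sum snd_sum fst_conv snd_conv blk_sum Ckey) (simp add: a_def)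
      finally show ?thesis .
    qed
    define g where "g = (\<lambda>j. Tmap S (\<zeta> j))"
    have g_rep: "g j = (a j, blk (\<lambda>i b. (1 / sq) *\<^sub>R (S *v C j i b)))" if "j < \<kappa>" for j
      unfolding g_def zeta_rep[OF that] Tmap_blk by (simp add: matrix_vector_mult_scaleR)
    have Sif: "S *v (r *\<^sub>R (if P then u else 0)) = r *\<^sub>R (if P then S *v u else 0)" for r P u
      by (simp add: matrix_vector_mult_scaleR)
    have phi'_rep: "\<phi>' = (1 / sqrt (mu c A v y),
        blk (\<lambda>i b. (- (sq / sqrt (mu c A v y))) *\<^sub>R (if b = (\<not> y i) then S *v v y i else 0)))"
      unfolding \<phi>'_def phi_rep Tmap_blk Sif ..
    have I1: "inner (\<zeta> j) (\<zeta> k) = a j * a k + (1/sq) * (1/sq) *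
        (\<Sum>i\<in>UNIV. \<Sum>b\<in>UNIV. inner (C j i b) (C k i b))" if "j < \<kappa>" "k < \<kappa>" for j k
      unfolding zeta_rep[OF that(1)] zeta_rep[OF that(2)] inner_pb_scale ..
    have I2: "inner (g j) (g k) = a j * a k + (1/sq) * (1/sq) *
        (\<Sum>i\<in>UNIV. \<Sum>b\<in>UNIV. inner (S *v C j i b) (S *v C k i b))" if "j < \<kappa>" "k < \<kappa>" for j k
      unfolding g_rep[OF that(1)] g_rep[OF that(2)] inner_pb_scale ..
    have I3: "inner (\<zeta> j) (phi c A v y) = a j * (1 / sqrt (mu c A v y)) + (1/sq) * (- (sq / sqrt (mu c A v y))) *
        (\<Sum>i\<in>UNIV. inner (C j i (\<not> y i)) (v y i))" if "j < \<kappa>" for j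
      unfolding zeta_rep[OF that] phi_rep inner_pb_scale sum_bool_if ..
    have I4: "inner (g j) \<phi>' = a j * (1 / sqrt (mu c A v y)) + (1/sq) * (- (sq / sqrt (mu c A v y))) *
        (\<Sum>i\<in>UNIV. inner (S *v C j i (\<not> y i)) (S *v v y i))" if "j < \<kappa>" for j
      unfolding g_rep[OF that] phi'_rep inner_pb_scale sum_bool_if ..
    define m where "m = sqrt (mu c A v y)"
    have mpos: "m > 0" and mle: "1 / m \<le> 1" using mu1[of y] unfolding m_def by auto
    have I5: "inner (psi c A v x) (phi c A v y) = 0" if "x \<in> X1" for x
    proof -
      have xX: "x \<in> X" and fx: "f x" using that unfolding X1_def by auto
      have dec: "(\<Sum>i\<in>{i. x i \<noteq> y i}. inner (v x i) (v y i)) = 1"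
        using deciding xX yX fx fy by auto
      have inb: "(\<Sum>b\<in>UNIV. inner (if b = x i then v x i else 0) (if b = (\<not> y i) then v y i else 0))
          = (if x i \<noteq> y i then inner (v x i) (v y i) else 0)" for i
        by (cases "x i"; cases "y i") (simp_all add: UNIV_bool)
      have s1: "(\<Sum>i\<in>UNIV. \<Sum>b\<in>UNIV. inner (if b = x i then v x i else 0) (if b = (\<not> y i) then v y i else 0)) = 1"
        unfolding inb using dec sum.inter_filter[of UNIV "\<lambda>i. inner (v x i) (v y i)" "\<lambda>i. x i \<noteq> y i"] by simp
      define n where "n = sqrt (nu c A v x)"
      have npos: "n > 0" using nu1[of x] unfolding n_def by auto
      have "inner (psi c A v x) (phi c A v y) = 1 / n * (1 / m) + 1 / n / sq * (- (sq / m)) * 1"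
        unfolding psi_rep phi_rep inner_pb_scale s1 n_def m_def ..
      also have "\<dots> = 0" using sqpos npos mpos by (simp add: field_simps)
      finally show ?thesis .
    qed
    have I6: "inner (\<zeta> j) (phi c A v y) = 0" if "j < \<kappa>" for j
      unfolding zeta_sum[OF that] inner_sum_left inner_scaleR_left using I5 by simp
    have aj: "a j = (\<Sum>i\<in>UNIV. inner (C j i (\<not> y i)) (v y i))" if "j < \<kappa>" for j
    proof -
      have "0 = a j * (1 / m) + (1/sq) * (- (sq / m)) * (\<Sum>i\<in>UNIV. inner (C j i (\<not> y i)) (v y i))"
        using I3[OF that] I6[OF that] unfolding m_def by simp
      also have "\<dots> = (a j - (\<Sum>i\<in>UNIV. inner (C j i (\<not> y i)) (v y i))) / m"
        using sqpos mpos by (simp add: field_simps)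
      finally show ?thesis using mpos by simp
    qed
    have I4': "inner (g j) \<phi>' = (1 / m) * (\<Sum>i\<in>UNIV. inner (C j i (\<not> y i)) (v y i) - inner (S *v C j i (\<not> y i)) (S *v v y i))"
      if "j < \<kappa>" for j
    proof -
      have "inner (g j) \<phi>' = a j * (1 / m) + (1/sq) * (- (sq / m)) * (\<Sum>i\<in>UNIV. inner (S *v C j i (\<not> y i)) (S *v v y i))"
        using I4[OF that] unfolding m_def by simp
      also have "\<dots> = (1 / m) * (a j - (\<Sum>i\<in>UNIV. inner (S *v C j i (\<not> y i)) (S *v v y i)))"
        using sqpos mpos by (simp add: field_simps)
      finally show ?thesis unfolding aj[OF that] by (simp add: sum_subtractf)
    qed
    have N1: "(\<Sum>i\<in>UNIV. \<Sum>b\<in>UNIV. (norm (C j i b))\<^sup>2) \<le> c * A" if "j < \<kappa>" for j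
    proof -
      have "1 = a j * a j + (1/sq) * (1/sq) * (\<Sum>i\<in>UNIV. \<Sum>b\<in>UNIV. (norm (C j i b))\<^sup>2)"
        using I1[OF that that] zeta_orthonormal that by (simp add: power2_norm_eq_inner)
      also have "\<dots> = a j * a j + (\<Sum>i\<in>UNIV. \<Sum>b\<in>UNIV. (norm (C j i b))\<^sup>2) / (c * A)"
        using sqsq by (simp add: field_simps)
      finally have "(\<Sum>i\<in>UNIV. \<Sum>b\<in>UNIV. (norm (C j i b))\<^sup>2) / (c * A) \<le> 1"
        by (smt (verit) zero_le_square)
      then show ?thesis using Apos c_pos by (simp add: divide_le_eq)
    qed
    define U where "U = {C j i b | j i b. j < \<kappa>} \<union> {v y i | y i. y \<in> X \<and> \<not> f y} \<union> {0}"
    have JL': "\<forall>u\<in>U. \<forall>w\<in>U. (1 - \<epsilon>) * (norm (u - w))\<^sup>2 \<le> (norm (S *v u - S *v w))\<^sup>2 \<and>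
                  (norm (S *v u - S *v w))\<^sup>2 \<le> (1 + \<epsilon>) * (norm (u - w))\<^sup>2"
      using JL unfolding Let_def U_def C_def by simp
    have CU: "C j i b \<in> U" if "j < \<kappa>" for j i b using that unfolding U_def by blast
    have vU: "v y i \<in> U" for i using yX fy unfolding U_def by blast
    have U0: "0 \<in> U" unfolding U_def by blast
    note jl = jl_inner[OF JL' U0 _ _ eps_pos]
    have gram: "\<bar>inner (g j) (g k) - (if j = k then 1 else 0)\<bar> \<le> 3 * \<epsilon>" if "j < \<kappa>" "k < \<kappa>" for j k
    proof -
      define D where "D = (\<lambda>i b. inner (S *v C j i b) (S *v C k i b) - inner (C j i b) (C k i b))"
      have "inner (g j) (g k) - (if j = k then 1 else 0) = inner (g j) (g k) - inner (\<zeta> j) (\<zeta> k)"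
        using zeta_orthonormal that by simp
      also have "\<dots> = (1/sq) * (1/sq) * (\<Sum>i\<in>UNIV. \<Sum>b\<in>UNIV. D i b)"
        unfolding I1[OF that] I2[OF that] D_def by (simp add: sum_subtractf algebra_simps)
      also have "\<dots> = (\<Sum>i\<in>UNIV. \<Sum>b\<in>UNIV. D i b) / (c * A)"
        using sqsq by (simp add: field_simps)
      finally have eq: "inner (g j) (g k) - (if j = k then 1 else 0) = (\<Sum>i\<in>UNIV. \<Sum>b\<in>UNIV. D i b) / (c * A)" .
      have "\<bar>\<Sum>i\<in>UNIV. \<Sum>b\<in>UNIV. D i b\<bar> \<le> (\<Sum>i\<in>UNIV. \<Sum>b\<in>UNIV. \<bar>D i b\<bar>)"
        by (rule order_trans[OF sum_abs]) (intro sum_mono sum_abs)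
      also have "\<dots> \<le> (\<Sum>i\<in>UNIV. \<Sum>b\<in>UNIV. 3/2 * \<epsilon> * ((norm (C j i b))\<^sup>2 + (norm (C k i b))\<^sup>2))"
        unfolding D_def by (intro sum_mono jl CU that)
      also have "\<dots> = 3/2 * \<epsilon> * ((\<Sum>i\<in>UNIV. \<Sum>b\<in>UNIV. (norm (C j i b))\<^sup>2) + (\<Sum>i\<in>UNIV. \<Sum>b\<in>UNIV. (norm (C k i b))\<^sup>2))"
        by (simp add: sum_distrib_left sum.distrib algebra_simps)
      also have "\<dots> \<le> 3/2 * \<epsilon> * (c * A + c * A)"
        using N1[OF that(1)] N1[OF that(2)] eps_pos by (intro mult_left_mono add_mono) auto
      finally have "\<bar>\<Sum>i\<in>UNIV. \<Sum>b\<in>UNIV. D i b\<bar> \<le> 3 * \<epsilon> * (c * A)" by (simp add: algebra_simps)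
      then show ?thesis unfolding eq using Apos c_pos by (simp add: abs_div divide_le_eq)
    qed
    define B where "B = 3/2 * \<epsilon> * (c + 1) * A"
    have bbound: "\<bar>inner (g j) \<phi>'\<bar> \<le> B" if "j < \<kappa>" for j
    proof -
      define D where "D = (\<lambda>i. inner (C j i (\<not> y i)) (v y i) - inner (S *v C j i (\<not> y i)) (S *v v y i))"
      have "\<bar>\<Sum>i\<in>UNIV. D i\<bar> \<le> (\<Sum>i\<in>UNIV. \<bar>D i\<bar>)" by (rule sum_abs)
      also have "\<dots> \<le> (\<Sum>i\<in>UNIV. 3/2 * \<epsilon> * ((norm (C j i (\<not> y i)))\<^sup>2 + (norm (v y i))\<^sup>2))"
        unfolding D_def by (intro sum_mono, subst abs_minus_commute, intro jl CU vU that)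
      also have "\<dots> = 3/2 * \<epsilon> * ((\<Sum>i\<in>UNIV. (norm (C j i (\<not> y i)))\<^sup>2) + (\<Sum>i\<in>UNIV. (norm (v y i))\<^sup>2))"
        by (simp add: sum_distrib_left sum.distrib algebra_simps)
      also have "\<dots> \<le> 3/2 * \<epsilon> * (c * A + A)"
      proof -
        have "(\<Sum>i\<in>UNIV. (norm (C j i (\<not> y i)))\<^sup>2) \<le> (\<Sum>i\<in>UNIV. \<Sum>b\<in>UNIV. (norm (C j i b))\<^sup>2)"
          by (intro sum_mono member_le_sum) auto
        then show ?thesis using N1[OF that] Ane[OF yX] eps_pos by (intro mult_left_mono add_mono) auto
      qed
      finally have Dle: "\<bar>\<Sum>i\<in>UNIV. D i\<bar> \<le> B" unfolding B_def by (simp add: algebra_simps)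
      have "\<bar>inner (g j) \<phi>'\<bar> = (1 / m) * \<bar>\<Sum>i\<in>UNIV. D i\<bar>"
        unfolding I4'[OF that] D_def using mpos by (simp add: abs_mult)
      also have "\<dots> \<le> 1 * B"
        using mle Dle mpos by (intro mult_mono) auto
      finally show ?thesis by simp
    qed
    have spanW: "span W = span (g ` {..<\<kappa>})"
    proof -
      have "span W = Tmap S ` span (psi c A v ` X1)"
        unfolding W_def by (rule span_linear_image[OF linear_Tmap])
      also have "\<dots> = Tmap S ` span (\<zeta> ` {..<\<kappa>})" using zeta_span unfolding X1_def by simp
      also have "\<dots> = span (Tmap S ` \<zeta> ` {..<\<kappa>})" by (rule span_linear_image[OF linear_Tmap, symmetric])
      also have "\<dots> = span (g ` {..<\<kappa>})" unfolding g_def by (simp add: image_image)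
      finally show ?thesis .
    qed
    obtain \<beta> where p\<beta>: "p = (\<Sum>j\<in>{..<\<kappa>}. \<beta> j *\<^sub>R g j)"
      using span_sum_repr[of p g "{..<\<kappa>}"] pW spanW by auto
    have orthg: "inner (\<phi>' - p) (g j) = 0" if "j < \<kappa>" for j
    proof -
      have "g j = (\<Sum>x\<in>X1. \<alpha> j x *\<^sub>R Tmap S (psi c A v x))"
        unfolding g_def zeta_sum[OF that] linear_sum[OF linear_Tmap] linear_scale[OF linear_Tmap] ..
      then show ?thesis using porth unfolding W_def by (simp add: inner_sum_right)
    qed
    define P where "P = inner p p"
    define sm where "sm = (\<Sum>j\<in>{..<\<kappa>}. \<bar>\<beta> j\<bar>)"
    define q where "q = (\<Sum>j\<in>{..<\<kappa>}. (\<beta> j)\<^sup>2)"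
    have P0: "0 \<le> P" unfolding P_def by simp
    have "inner (\<phi>' - p) (\<Sum>j\<in>{..<\<kappa>}. \<beta> j *\<^sub>R g j) = 0" unfolding inner_sum_right using orthg by simp
    then have "inner (\<phi>' - p) p = 0" by (metis p\<beta>)
    then have PP: "P = inner \<phi>' p" unfolding P_def by (simp add: inner_diff_left)
    have P_upper: "P \<le> sm * B"
    proof -
      have "P = (\<Sum>j\<in>{..<\<kappa>}. \<beta> j * inner (g j) \<phi>')"
        unfolding PP p\<beta> inner_sum_right by (simp add: inner_commute)
      also have "\<dots> \<le> (\<Sum>j\<in>{..<\<kappa>}. \<bar>\<beta> j\<bar> * B)"
      proof (rule sum_mono)
        fix j assume "j \<in> {..<\<kappa>}"
        then have "\<bar>inner (g j) \<phi>'\<bar> \<le> B" using bbound by simp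
        then have "\<bar>\<beta> j\<bar> * \<bar>inner (g j) \<phi>'\<bar> \<le> \<bar>\<beta> j\<bar> * B" by (intro mult_left_mono) auto
        moreover have "\<beta> j * inner (g j) \<phi>' \<le> \<bar>\<beta> j\<bar> * \<bar>inner (g j) \<phi>'\<bar>"
          by (metis abs_ge_self abs_mult)
        ultimately show "\<beta> j * inner (g j) \<phi>' \<le> \<bar>\<beta> j\<bar> * B" by linarith
      qed
      finally show ?thesis unfolding sm_def by (simp add: sum_distrib_right)
    qed
    have P_lower: "q - 3 * \<epsilon> * sm\<^sup>2 \<le> P"
    proof -
      have "P = (\<Sum>k\<in>{..<\<kappa>}. \<Sum>j\<in>{..<\<kappa>}. \<beta> j * \<beta> k * inner (g j) (g k))"
        unfolding P_def p\<beta> inner_sum_left inner_sum_right by (simp add: algebra_simps)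
      also have "\<dots> = (\<Sum>j\<in>{..<\<kappa>}. \<Sum>k\<in>{..<\<kappa>}. \<beta> j * \<beta> k * inner (g j) (g k))"
        by (rule sum.swap)
      also have "\<dots> = (\<Sum>j\<in>{..<\<kappa>}. \<Sum>k\<in>{..<\<kappa>}. \<beta> j * \<beta> k * (if j = k then 1 else 0))
          + (\<Sum>j\<in>{..<\<kappa>}. \<Sum>k\<in>{..<\<kappa>}. \<beta> j * \<beta> k * (inner (g j) (g k) - (if j = k then 1 else 0)))"
        by (simp add: sum.distrib[symmetric] algebra_simps)
      also have "(\<Sum>j\<in>{..<\<kappa>}. \<Sum>k\<in>{..<\<kappa>}. \<beta> j * \<beta> k * (if j = k then 1 else 0)) = q"
        unfolding q_def by (simp add: power2_eq_square if_distrib[of "\<lambda>t. _ * t"] sum.delta cong: if_cong)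
      also have "(\<Sum>j\<in>{..<\<kappa>}. \<Sum>k\<in>{..<\<kappa>}. \<beta> j * \<beta> k * (inner (g j) (g k) - (if j = k then 1 else 0)))
          \<ge> (\<Sum>j\<in>{..<\<kappa>}. \<Sum>k\<in>{..<\<kappa>}. - (3 * \<epsilon>) * (\<bar>\<beta> j\<bar> * \<bar>\<beta> k\<bar>))"
      proof (intro sum_mono)
        fix j k assume "j \<in> {..<\<kappa>}" "k \<in> {..<\<kappa>}"
        then have "\<bar>inner (g j) (g k) - (if j = k then 1 else 0)\<bar> \<le> 3 * \<epsilon>" using gram by simp
        then have "\<bar>\<beta> j * \<beta> k\<bar> * \<bar>inner (g j) (g k) - (if j = k then 1 else 0)\<bar> \<le> \<bar>\<beta> j * \<beta> k\<bar> * (3 * \<epsilon>)"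
          by (intro mult_left_mono) auto
        moreover have "- \<bar>\<beta> j * \<beta> k * (inner (g j) (g k) - (if j = k then 1 else 0))\<bar> \<le> \<beta> j * \<beta> k * (inner (g j) (g k) - (if j = k then 1 else 0))"
          by (rule abs_ge_minus_self[simplified neg_le_iff_le, THEN minus_le_iff[THEN iffD1]])
        moreover have "\<bar>\<beta> j * \<beta> k * (inner (g j) (g k) - (if j = k then 1 else 0))\<bar> = \<bar>\<beta> j * \<beta> k\<bar> * \<bar>inner (g j) (g k) - (if j = k then 1 else 0)\<bar>"
          by (rule abs_mult)
        moreover have "\<bar>\<beta> j * \<beta> k\<bar> = \<bar>\<beta> j\<bar> * \<bar>\<beta> k\<bar>" by (rule abs_mult)
        ultimately show "- (3 * \<epsilon>) * (\<bar>\<beta> j\<bar> * \<bar>\<beta> k\<bar>) \<le> \<beta> j * \<beta> k * (inner (g j) (g k) - (if j = k then 1 else 0))"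
          by (simp add: algebra_simps)
      qed
      moreover have "(\<Sum>j\<in>{..<\<kappa>}. \<Sum>k\<in>{..<\<kappa>}. - (3 * \<epsilon>) * (\<bar>\<beta> j\<bar> * \<bar>\<beta> k\<bar>)) = - 3 * \<epsilon> * sm\<^sup>2"
        unfolding sm_def power2_eq_square sum_product by (simp add: sum_distrib_left)
      ultimately show ?thesis by linarith
    qed
    have CSq: "sm\<^sup>2 \<le> real \<kappa> * q"
      using Cauchy_Schwarz_ineq_sum[of "\<lambda>_. 1" "\<lambda>j. \<bar>\<beta> j\<bar>" "{..<\<kappa>}"] unfolding sm_def q_def by simp
    have B0: "0 \<le> B" unfolding B_def using eps_pos c_pos A0 by simp
    have sm0: "0 \<le> sm" unfolding sm_def by (simp add: sum_nonneg)
    have Pb: "P \<le> 4/3 * real \<kappa> * B\<^sup>2"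
      using final_arith[OF P0 P_upper _ CSq _ sm0 B0 _ eps_pos] P_lower small by (simp add: mult.commute)
    have "(norm p)\<^sup>2 \<le> (8/3 * B * sqrt (real \<kappa>))\<^sup>2"
    proof -
      have "(norm p)\<^sup>2 = P" unfolding P_def by (simp add: power2_norm_eq_inner)
      also have "\<dots> \<le> 4/3 * real \<kappa> * B\<^sup>2" by (rule Pb)
      also have "\<dots> \<le> 64/9 * real \<kappa> * B\<^sup>2" by (intro mult_right_mono) auto
      also have "\<dots> = (8/3 * B * sqrt (real \<kappa>))\<^sup>2" by (simp add: power_mult_distrib power2_eq_square)
      finally show ?thesis .
    qed
    then have "norm p \<le> 8/3 * B * sqrt (real \<kappa>)"
      by (rule power2_le_imp_le) (use B0 in simp)
    then show ?thesis unfolding B_def by (simp add: algebra_simps)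
  qed
  have fin: "norm (\<phi>' + (2 *\<^sub>R p - \<phi>')) \<le> 8 * \<epsilon> * (c + 1) * A * sqrt (real \<kappa>)"
  proof -
    have "norm (\<phi>' + (2 *\<^sub>R p - \<phi>')) = 2 * norm p" by simp
    then show ?thesis using main by linarith
  qed
  then show "let W = Tmap S ` psi c A v ` {x \<in> X. f x};
                R = (\<lambda>h. 2 *\<^sub>R orth_proj W h - h);
                \<phi>' = Tmap S (phi c A v y)
            in norm (\<phi>' + R \<phi>') \<le> 8 * \<epsilon> * (c + 1) * A * sqrt (real \<kappa>)"
    unfolding Let_def p_def \<phi>'_def W_def X1_def .
qed

end
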